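(* Let $k$ be a field of characteristic $p>0$, let $R$ be a smooth $k$-algebra, let $e\in\mathbb N_{>0}$ and $m\in\mathbb N_{>0}$, and let $\mathbb D=(D_{\mathbf i})_{\mathbf i\in[p^m]^e}$ be an $m$-truncated $e$-dimensional HS-derivation on $R$ over $k$. Then there exists an $e$-dimensional HS-derivation $\mathbb D'=(D'_{\mathbf i})_{\mathbf i\in\mathbb N^e}$ on $R$ over $k$ such that $D'_{\mathbf i}=D_{\mathbf i}$ for every $\mathbf i\in[p^m]^e$.
   Context: All rings are commutative with $1$. For $m\in\mathbb N_{>0}\cup\{\infty\}$ and a $k$-algebra $R$ put $R[\bar v]:=R[X_1,\dots,X_e]/(X_1^{p^m},\dots,X_e^{p^m})$, with $v_i$ the image of $X_i$ (for $m=\infty$, $R[\bar v]:=R[[X_1,\dots,X_e]]$ and $v_i=X_i$). Let $[p^m]=\{0,1,\dots,p^m-1\}$ (and $[p^\infty]=\mathbb N$); for $\mathbf i=(i_1,\dots,i_e)$ write $\bar v^{\mathbf i}=v_1^{i_1}\cdots v_e^{i_e}$. An $m$-truncated $e$-dimensional HS-derivation on $R$ over $k$ is a family $\mathbb D=(D_{\mathbf i}:R\to R)_{\mathbf i\in[p^m]^e}$ such that the map $R\to R[\bar v]$, $r\mapsto\sum_{\mathbf i}D_{\mathbf i}(r)\bar v^{\mathbf i}$, is a $k$-algebra homomorphism and $D_{\mathbf 0}=\mathrm{id}_R$. For $m=\infty$ this is called an $e$-dimensional HS-derivation. *)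

theory Defs
  imports "HOL-Algebra.Ring" "HOL-Algebra.Ideal"
begin

text \<open>The base field k is a type 'k of class field; the k-algebra R is a
type 'r of class comm_ring_1 together with its structure map phi :: 'k => 'r, a ring
homomorphism.  Multi-indices in N^e are lists of naturals of length e.\<close>

definition is_ring_hom_fun :: "('a::comm_ring_1 \<Rightarrow> 'b::comm_ring_1) \<Rightarrow> bool" where
  "is_ring_hom_fun f \<longleftrightarrow> f 1 = 1 \<and> (\<forall>x y. f (x + y) = f x + f y) \<and> (\<forall>x y. f (x * y) = f x * f y)"

inductive_set alg_gen :: "('k::field \<Rightarrow> 'r::comm_ring_1) \<Rightarrow> 'r set \<Rightarrow> 'r set"
  for phi :: "'k \<Rightarrow> 'r" and G :: "'r set" where
  scal: "phi c \<in> alg_gen phi G"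
| gen: "x \<in> G \<Longrightarrow> x \<in> alg_gen phi G"
| add: "x \<in> alg_gen phi G \<Longrightarrow> y \<in> alg_gen phi G \<Longrightarrow> x + y \<in> alg_gen phi G"
| mult: "x \<in> alg_gen phi G \<Longrightarrow> y \<in> alg_gen phi G \<Longrightarrow> x * y \<in> alg_gen phi G"

definition finite_type :: "('k::field \<Rightarrow> 'r::comm_ring_1) \<Rightarrow> bool" where
  "finite_type phi \<longleftrightarrow> (\<exists>G. finite G \<and> alg_gen phi G = UNIV)"

text \<open>Formal smoothness (infinitesimal lifting property): for every k-algebra A, every
square-zero ideal I of A, every k-algebra homomorphism R -> A/I lifts to a k-algebra
homomorphism R -> A.  A map R -> A/I is represented by a set-theoretic lift f : R -> A
that is a k-algebra homomorphism modulo I.  The test algebras A range over (HOL-Algebra)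
commutative rings whose carrier lies in the type nat list => 'r; this type has cardinality
at least max(|R|,|k|,aleph_0), which suffices.\<close>
definition formally_smooth :: "('k::field \<Rightarrow> 'r::comm_ring_1) \<Rightarrow> bool" where
  "formally_smooth phi \<longleftrightarrow>
    (\<forall>(A :: (nat list \<Rightarrow> 'r) ring) (psi :: 'k \<Rightarrow> nat list \<Rightarrow> 'r) (I :: (nat list \<Rightarrow> 'r) set)
        (f :: 'r \<Rightarrow> nat list \<Rightarrow> 'r).
      cring A \<and>
      (\<forall>c. psi c \<in> carrier A) \<and> psi 1 = \<one>\<^bsub>A\<^esub> \<and>
      (\<forall>c d. psi (c + d) = psi c \<oplus>\<^bsub>A\<^esub> psi d) \<and> (\<forall>c d. psi (c * d) = psi c \<otimes>\<^bsub>A\<^esub> psi d) \<and>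
      ideal I A \<and> (\<forall>x\<in>I. \<forall>y\<in>I. x \<otimes>\<^bsub>A\<^esub> y = \<zero>\<^bsub>A\<^esub>) \<and>
      (\<forall>r. f r \<in> carrier A) \<and>
      f 1 \<ominus>\<^bsub>A\<^esub> \<one>\<^bsub>A\<^esub> \<in> I \<and>
      (\<forall>r s. f (r + s) \<ominus>\<^bsub>A\<^esub> (f r \<oplus>\<^bsub>A\<^esub> f s) \<in> I) \<and>
      (\<forall>r s. f (r * s) \<ominus>\<^bsub>A\<^esub> (f r \<otimes>\<^bsub>A\<^esub> f s) \<in> I) \<and>
      (\<forall>c. f (phi c) \<ominus>\<^bsub>A\<^esub> psi c \<in> I)
      \<longrightarrow>
      (\<exists>g :: 'r \<Rightarrow> nat list \<Rightarrow> 'r.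
         (\<forall>r. g r \<in> carrier A) \<and> g 1 = \<one>\<^bsub>A\<^esub> \<and>
         (\<forall>r s. g (r + s) = g r \<oplus>\<^bsub>A\<^esub> g s) \<and>
         (\<forall>r s. g (r * s) = g r \<otimes>\<^bsub>A\<^esub> g s) \<and>
         (\<forall>c. g (phi c) = psi c) \<and>
         (\<forall>r. g r \<ominus>\<^bsub>A\<^esub> f r \<in> I)))"

text \<open>Smooth = of finite type (equivalently, over a field, of finite presentation) and
formally smooth.\<close>
definition smooth_algebra :: "('k::field \<Rightarrow> 'r::comm_ring_1) \<Rightarrow> bool" where
  "smooth_algebra phi \<longleftrightarrow> is_ring_hom_fun phi \<and> finite_type phi \<and> formally_smooth phi"

definition trunc_idx :: "nat \<Rightarrow> nat \<Rightarrow> nat list set" where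
  "trunc_idx e n = {i. length i = e \<and> (\<forall>t<e. i ! t < n)}"

definition full_idx :: "nat \<Rightarrow> nat list set" where
  "full_idx e = {i. length i = e}"

text \<open>A family D indexed by the downward-closed set Idx of multi-indices of length e
(Idx = [p^m]^e or N^e) is an HS-derivation over k iff r |-> sum_i D_i(r) v^i is a
k-algebra homomorphism R -> R[v] with D_0 = id.  Written componentwise: each D_i is
additive, commutes with the k-structure on coefficients (D_i(phi c * r) = phi c * D_i r),
satisfies D_i(1) = 0 for i <> 0 (unitality), and the Leibniz rule
D_i(rs) = sum_{j+l=i} D_j(r) D_l(s) (multiplicativity in the truncated/full power series
ring; the truncation never interferes because Idx is downward closed).\<close>
definition HS_deriv :: "('k::field \<Rightarrow> 'r::comm_ring_1) \<Rightarrow> nat \<Rightarrow> nat list set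
    \<Rightarrow> (nat list \<Rightarrow> 'r \<Rightarrow> 'r) \<Rightarrow> bool" where
  "HS_deriv phi e Idx D \<longleftrightarrow>
    (\<forall>r. D (replicate e 0) r = r) \<and>
    (\<forall>i\<in>Idx. i \<noteq> replicate e 0 \<longrightarrow> D i 1 = 0) \<and>
    (\<forall>i\<in>Idx. \<forall>r s. D i (r + s) = D i r + D i s) \<and>
    (\<forall>i\<in>Idx. \<forall>c r. D i (phi c * r) = phi c * D i r) \<and>
    (\<forall>i\<in>Idx. \<forall>r s. D i (r * s) =
        (\<Sum>(j, l) \<in> {(j, l). length j = e \<and> length l = e \<and> map2 (+) j l = i}. D j r * D l s))"

end

theory Submission
  imports Defs
begin

definition Pset :: "nat \<Rightarrow> nat list \<Rightarrow> (nat list \<times> nat list) set" where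
  "Pset e i = {(j, l). length j = e \<and> length l = e \<and> map2 (+) j l = i}"

definition conv :: "nat \<Rightarrow> (nat list \<Rightarrow> 'r::comm_ring_1) \<Rightarrow> (nat list \<Rightarrow> 'r) \<Rightarrow> nat list \<Rightarrow> 'r" where
  "conv e f g i = (\<Sum>(j, l)\<in>Pset e i. f j * g l)"

lemma map2_nth: "t < length j \<Longrightarrow> t < length l \<Longrightarrow> map2 (+) j l ! t = j ! t + (l ! t :: nat)"
  by simp

lemma Pset_D: "(j, l) \<in> Pset e i \<Longrightarrow> length j = e \<and> length l = e \<and> length i = e \<and> (\<forall>t<e. i ! t = j ! t + l ! t)"
  unfolding Pset_def by auto

lemma Pset_I: "length j = e \<Longrightarrow> length l = e \<Longrightarrow> length i = e \<Longrightarrow> (\<forall>t<e. i ! t = j ! t + l ! t) \<Longrightarrow> (j, l) \<in> Pset e i"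
  unfolding Pset_def by (auto intro!: nth_equalityI)

lemma finite_Pset: "finite (Pset e i)"
proof -
  let ?L = "{xs. set xs \<subseteq> {..sum_list i} \<and> length xs = e}"
  have "Pset e i \<subseteq> ?L \<times> ?L"
  proof
    fix x assume x: "x \<in> Pset e i"
    obtain j l where [simp]: "x = (j, l)" by (cases x)
    from x have d: "length j = e \<and> length l = e \<and> length i = e \<and> (\<forall>t<e. i ! t = j ! t + l ! t)"
      using Pset_D by simp
    have "\<forall>t<e. i ! t \<le> sum_list i" using d elem_le_sum_list by metis
    then have "set j \<subseteq> {..sum_list i}" "set l \<subseteq> {..sum_list i}" using d
      by (auto simp: in_set_conv_nth) (metis le_add1 le_trans, metis le_add2 le_trans)
    then show "x \<in> ?L \<times> ?L" using d by auto
  qed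
  moreover have "finite (?L \<times> ?L)" by (intro finite_cartesian_product finite_lists_length_eq) auto
  ultimately show ?thesis by (rule finite_subset)
qed

lemma Pset_swap: "(j, l) \<in> Pset e i \<longleftrightarrow> (l, j) \<in> Pset e i"
  by (auto dest!: Pset_D intro!: Pset_I)

lemma conv_comm: "conv e f g i = conv e g f i"
  unfolding conv_def
proof -
  have "bij_betw (\<lambda>(j,l). (l,j)) (Pset e i) (Pset e i)"
    by (rule bij_betwI[where g="\<lambda>(j,l). (l,j)"]) (auto simp: Pset_swap)
  then have "(\<Sum>x\<in>Pset e i. (case x of (j, l) \<Rightarrow> g j * f l)) = (\<Sum>x\<in>Pset e i. (case (case x of (j,l) \<Rightarrow> (l,j)) of (j, l) \<Rightarrow> g j * f l))"
    by (rule sum.reindex_bij_betw[symmetric])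
  then show "(\<Sum>(j, l)\<in>Pset e i. f j * g l) = (\<Sum>(j, l)\<in>Pset e i. g j * f l)"
    by (simp add: split_def mult.commute)
qed

definition Tset :: "nat \<Rightarrow> nat list \<Rightarrow> (nat list \<times> nat list \<times> nat list) set" where
  "Tset e i = {(a, b, c). length a = e \<and> length b = e \<and> length c = e \<and> length i = e \<and> (\<forall>t<e. i ! t = a ! t + b ! t + c ! t)}"

lemma Sig1: "(j,l)\<in>Pset e i \<Longrightarrow> (a,b)\<in>Pset e j \<Longrightarrow> (a,b,l) \<in> Tset e i"
  unfolding Tset_def by (auto dest!: Pset_D)
lemma Sig1': "(a,b,c)\<in>Tset e i \<Longrightarrow> (map2 (+) a b, c)\<in>Pset e i \<and> (a,b) \<in> Pset e (map2 (+) a b)"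
  unfolding Tset_def by (auto intro!: Pset_I)
lemma Sig2: "(a,k)\<in>Pset e i \<Longrightarrow> (b,c)\<in>Pset e k \<Longrightarrow> (a,b,c)\<in>Tset e i"
  unfolding Tset_def by (auto dest!: Pset_D simp: add.assoc)
lemma Sig2': "(a,b,c)\<in>Tset e i \<Longrightarrow> (a, map2 (+) b c)\<in>Pset e i \<and> (b,c)\<in>Pset e (map2 (+) b c)"
  unfolding Tset_def by (auto intro!: Pset_I simp: add.assoc)

lemma conv_assoc: "conv e (conv e f g) h i = conv e f (conv e g h) i"
proof -
  have "conv e (conv e f g) h i = (\<Sum>(j, l)\<in>Pset e i. \<Sum>(a, b)\<in>Pset e j. f a * g b * h l)"
    unfolding conv_def by (simp add: sum_distrib_right split_def)
  also have "\<dots> = (\<Sum>x\<in>Sigma (Pset e i) (\<lambda>(j,l). Pset e j). f (fst (snd x)) * g (snd (snd x)) * h (snd (fst x)))"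
  proof -
    have "(\<Sum>x\<in>Pset e i. \<Sum>y\<in>(case x of (j,l) \<Rightarrow> Pset e j). f (fst y) * g (snd y) * h (snd x))
       = (\<Sum>(x,y)\<in>Sigma (Pset e i) (\<lambda>(j,l). Pset e j). f (fst y) * g (snd y) * h (snd x))"
      by (rule sum.Sigma) (auto simp: finite_Pset split: prod.split)
    then show ?thesis by (simp add: split_def)
  qed
  also have "\<dots> = (\<Sum>y\<in>Tset e i. f (fst y) * g (fst (snd y)) * h (snd (snd y)))"
  apply (rule sum.reindex_bij_witness[where i="\<lambda>(a,b,c). ((map2 (+) a b, c), (a, b))" and j="\<lambda>((j,l),(a,b)). (a,b,l)"])
  subgoal by (auto simp: Pset_def split: prod.splits)
  subgoal by (auto split: prod.splits intro: Sig1)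
  subgoal by (auto split: prod.splits)
  subgoal by (auto split: prod.splits dest: Sig1')
  subgoal by (auto split: prod.splits)
  done
  also have "\<dots> = (\<Sum>x\<in>Sigma (Pset e i) (\<lambda>(a,c). Pset e c). f (fst (fst x)) * g (fst (snd x)) * h (snd (snd x)))"
  apply (rule sum.reindex_bij_witness[where j="\<lambda>(a,b,c). ((a, map2 (+) b c), (b, c))" and i="\<lambda>((a,k),(b,c)). (a,b,c)"])
  subgoal by (auto split: prod.splits)
  subgoal by (auto split: prod.splits dest: Sig2')
  subgoal by (auto simp: Pset_def split: prod.splits)
  subgoal by (auto split: prod.splits intro: Sig2)
  subgoal by (auto split: prod.splits)
  done
  also have "\<dots> = (\<Sum>(a, k)\<in>Pset e i. \<Sum>(b, c)\<in>Pset e k. f a * (g b * h c))"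
  proof -
    have "(\<Sum>x\<in>Pset e i. \<Sum>y\<in>(case x of (a,k) \<Rightarrow> Pset e k). f (fst x) * (g (fst y) * h (snd y)))
       = (\<Sum>(x,y)\<in>Sigma (Pset e i) (\<lambda>(a,k). Pset e k). f (fst x) * (g (fst y) * h (snd y)))"
      by (rule sum.Sigma) (auto simp: finite_Pset split: prod.split)
    then show ?thesis by (simp add: split_def mult.assoc)
  qed
  also have "\<dots> = conv e f (conv e g h) i"
    unfolding conv_def by (simp add: sum_distrib_left split_def)
  finally show ?thesis .
qed


definition dclosed :: "nat \<Rightarrow> nat list set \<Rightarrow> bool" where
  "dclosed e S \<longleftrightarrow> S \<subseteq> full_idx e \<and> replicate e 0 \<in> S \<and>
     (\<forall>i\<in>S. \<forall>j. length j = e \<and> (\<forall>t<e. j ! t \<le> i ! t) \<longrightarrow> j \<in> S)"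

lemma dclosed_Pset: "dclosed e S \<Longrightarrow> i \<in> S \<Longrightarrow> (j, l) \<in> Pset e i \<Longrightarrow> j \<in> S \<and> l \<in> S"
  unfolding dclosed_def by (drule Pset_D) (metis le_add1 le_add2)

lemma conv_trunc1: "dclosed e S \<Longrightarrow> i \<in> S \<Longrightarrow> conv e (\<lambda>j. if j \<in> S then F j else 0) h i = conv e F h i"
  unfolding conv_def by (rule sum.cong) (auto dest: dclosed_Pset)

lemma conv_trunc2: "dclosed e S \<Longrightarrow> i \<in> S \<Longrightarrow> conv e h (\<lambda>j. if j \<in> S then F j else 0) i = conv e h F i"
  unfolding conv_def by (rule sum.cong) (auto dest: dclosed_Pset)

definition one_idx :: "nat \<Rightarrow> nat list \<Rightarrow> 'r::comm_ring_1" where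
  "one_idx e = (\<lambda>i. if i = replicate e 0 then 1 else 0)"

lemma conv_one: "length i = e \<Longrightarrow> conv e (one_idx e) g i = g i"
proof -
  assume li: "length i = e"
  have mem: "(replicate e 0, i) \<in> Pset e i" using li by (auto intro!: Pset_I)
  have "conv e (one_idx e) g i = (\<Sum>x\<in>Pset e i. if x = (replicate e 0, i) then g i else 0)"
    unfolding conv_def one_idx_def
  proof (rule sum.cong)
    fix x assume x: "x \<in> Pset e i"
    obtain j l where [simp]: "x = (j, l)" by (cases x)
    from x have d: "length j = e \<and> length l = e \<and> length i = e \<and> (\<forall>t<e. i ! t = j ! t + l ! t)"
      using Pset_D by simp
    show "(case x of (j, l) \<Rightarrow> (if j = replicate e 0 then 1 else 0) * g l) = (if x = (replicate e 0, i) then g i else 0)"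
    proof (cases "j = replicate e 0")
      case True
      then have "l = i" using d by (auto intro!: nth_equalityI)
      then show ?thesis using True by simp
    qed simp
  qed simp
  also have "\<dots> = g i" using mem finite_Pset by (simp add: sum.delta')
  finally show ?thesis .
qed

lemma conv_add1: "conv e (\<lambda>j. f j + g j) h i = conv e f h i + conv e g h i"
  unfolding conv_def by (simp add: split_def distrib_right sum.distrib)

definition TA :: "nat \<Rightarrow> nat list set \<Rightarrow> (nat list \<Rightarrow> 'r::comm_ring_1) ring" where
  "TA e S = \<lparr>carrier = {f. \<forall>i. i \<notin> S \<longrightarrow> f i = 0},
     mult = (\<lambda>f g i. if i \<in> S then conv e f g i else 0),
     one = one_idx e, zero = (\<lambda>i. 0), add = (\<lambda>f g i. f i + g i)\<rparr>"

lemma TA_simps: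
  "carrier (TA e S) = {f. \<forall>i. i \<notin> S \<longrightarrow> f i = 0}"
  "mult (TA e S) f g = (\<lambda>i. if i \<in> S then conv e f g i else 0)"
  "one (TA e S) = one_idx e"
  "zero (TA e S) = (\<lambda>i. 0)"
  "add (TA e S) f g = (\<lambda>i. f i + g i)"
  unfolding TA_def by simp_all

lemma TA_cring:
  assumes dc: "dclosed e S"
  shows "cring (TA e S :: (nat list \<Rightarrow> 'r::comm_ring_1) ring)"
proof -
  have z: "replicate e 0 \<in> S" and sub: "S \<subseteq> full_idx e" using dc unfolding dclosed_def by auto
  have ag: "abelian_group (TA e S :: (nat list \<Rightarrow> 'r) ring)"
  proof (rule abelian_groupI, goal_cases)
    case (6 x)
    then show ?case by (intro bexI[where x="\<lambda>i. - x i"]) (auto simp: TA_simps)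
  qed (auto simp: TA_simps add.assoc add.commute)
  have cm: "comm_monoid (TA e S :: (nat list \<Rightarrow> 'r) ring)"
  proof (rule comm_monoidI, goal_cases)
    case 1 then show ?case by (auto simp: TA_simps)
  next
    case 2 then show ?case using z by (auto simp: TA_simps one_idx_def)
  next
    case (3 x y z)
    show ?case
    proof
      fix i
      show "(x \<otimes>\<^bsub>TA e S\<^esub> y \<otimes>\<^bsub>TA e S\<^esub> z) i = (x \<otimes>\<^bsub>TA e S\<^esub> (y \<otimes>\<^bsub>TA e S\<^esub> z)) i"
        using dc by (auto simp: TA_simps conv_trunc1 conv_trunc2 conv_assoc)
    qed
  next
    case (4 x)
    show ?case
    proof
      fix i
      show "(\<one>\<^bsub>TA e S\<^esub> \<otimes>\<^bsub>TA e S\<^esub> x) i = x i"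
        using 4 sub by (auto simp: TA_simps conv_one full_idx_def)
    qed
  next
    case (5 x y)
    then show ?case by (auto simp: TA_simps conv_comm)
  qed
  show ?thesis
  proof (rule cringI[OF ag cm], goal_cases)
    case (1 x y z)
    then show ?case by (auto simp: TA_simps conv_add1)
  qed
qed


lemma TA_ainv:
  assumes dc: "dclosed e S" and x: "x \<in> carrier (TA e S :: (nat list \<Rightarrow> 'r::comm_ring_1) ring)"
  shows "\<ominus>\<^bsub>TA e S\<^esub> x = (\<lambda>i. - x i)"
proof -
  interpret cring "TA e S :: (nat list \<Rightarrow> 'r) ring" by (rule TA_cring[OF dc])
  show ?thesis
    by (rule minus_equality) (use x in \<open>auto simp: TA_simps\<close>)
qed

lemma TA_minus:
  assumes dc: "dclosed e S" and x: "x \<in> carrier (TA e S :: (nat list \<Rightarrow> 'r::comm_ring_1) ring)"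
    and y: "y \<in> carrier (TA e S)"
  shows "x \<ominus>\<^bsub>TA e S\<^esub> y = (\<lambda>i. x i - y i)"
  unfolding a_minus_def using TA_ainv[OF dc y] by (simp add: TA_simps)

lemma TA_ideal:
  assumes dc: "dclosed e S'" and sub: "S \<subseteq> S'" and dS: "dclosed e S"
  shows "ideal {x \<in> carrier (TA e S' :: (nat list \<Rightarrow> 'r::comm_ring_1) ring). \<forall>i\<in>S. x i = 0} (TA e S')"
proof (rule idealI)
  show "ring (TA e S' :: (nat list \<Rightarrow> 'r) ring)" using TA_cring[OF dc] cring.axioms(1) by blast
  show "subgroup {x \<in> carrier (TA e S' :: (nat list \<Rightarrow> 'r) ring). \<forall>i\<in>S. x i = 0} (add_monoid (TA e S'))"
  proof (rule subgroup.intro)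
    fix x assume "x \<in> {x \<in> carrier (TA e S' :: (nat list \<Rightarrow> 'r) ring). \<forall>i\<in>S. x i = 0}"
    then show "inv\<^bsub>add_monoid (TA e S')\<^esub> x \<in> {x \<in> carrier (TA e S' :: (nat list \<Rightarrow> 'r) ring). \<forall>i\<in>S. x i = 0}"
      using TA_ainv[OF dc, of x] unfolding a_inv_def[symmetric] by (auto simp: TA_simps)
  qed (auto simp: TA_simps)
next
  fix a x assume a: "a \<in> {x \<in> carrier (TA e S' :: (nat list \<Rightarrow> 'r) ring). \<forall>i\<in>S. x i = 0}"
    and x: "(x :: nat list \<Rightarrow> 'r) \<in> carrier (TA e S')"
  have "conv e x a i = 0" if "i \<in> S" for i
    unfolding conv_def using a dclosed_Pset[OF dS that] by (intro sum.neutral) auto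
  moreover have "conv e a x i = 0" if "i \<in> S" for i
    unfolding conv_def using a dclosed_Pset[OF dS that] by (intro sum.neutral) auto
  ultimately show "x \<otimes>\<^bsub>TA e S'\<^esub> a \<in> {x \<in> carrier (TA e S'). \<forall>i\<in>S. x i = 0}"
     and "a \<otimes>\<^bsub>TA e S'\<^esub> x \<in> {x \<in> carrier (TA e S'). \<forall>i\<in>S. x i = 0}"
    using sub by (auto simp: TA_simps)
qed

lemma conv_scal: "conv e (\<lambda>j. a * f j) g i = a * conv e f g i"
  unfolding conv_def by (simp add: split_def sum_distrib_left mult.assoc)

lemma conv_delta: "length i = e \<Longrightarrow> conv e (\<lambda>j. if j = replicate e 0 then a else 0) g i = a * g i"
proof -
  assume "length i = e"
  have "(\<lambda>j. if j = replicate e 0 then a else 0) = (\<lambda>j. a * one_idx e j)"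
    by (auto simp: one_idx_def)
  then show ?thesis using \<open>length i = e\<close> by (simp add: conv_scal conv_one)
qed


lemma step:
  fixes phi :: "'k::field \<Rightarrow> 'r::comm_ring_1" and E :: "nat list \<Rightarrow> 'r \<Rightarrow> 'r"
  assumes hom: "is_ring_hom_fun phi" and fs: "formally_smooth phi"
    and dS: "dclosed e S" and dS': "dclosed e S'" and sub: "S \<subseteq> S'"
    and sq: "\<And>i j. i \<in> S' - S \<Longrightarrow> j \<in> S' - S \<Longrightarrow> map2 (+) i j \<notin> S'"
    and E: "HS_deriv phi e S E"
  shows "\<exists>E'. HS_deriv phi e S' E' \<and> (\<forall>i\<in>S. E' i = E i)"
proof -
  define A where "A = (TA e S' :: (nat list \<Rightarrow> 'r) ring)"
  define psi where "psi = (\<lambda>c::'k. \<lambda>i::nat list. if i = replicate e 0 then phi c else 0)"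
  define I where "I = {x \<in> carrier A. \<forall>i\<in>S. x i = 0}"
  define f where "f = (\<lambda>r::'r. \<lambda>i. if i \<in> S then E i r else 0)"
  have z: "replicate e 0 \<in> S" using dS unfolding dclosed_def by auto
  have zS': "replicate e 0 \<in> S'" and S'full: "S' \<subseteq> full_idx e" using dS' unfolding dclosed_def by auto
  have len: "\<And>i. i \<in> S' \<Longrightarrow> length i = e" using S'full by (auto simp: full_idx_def)
  have cr: "cring A" unfolding A_def by (rule TA_cring[OF dS'])
  interpret A: cring A by (rule cr)
  have fc: "\<And>r. f r \<in> carrier A" using sub by (auto simp: f_def A_def TA_simps)
  have psic: "\<And>c. psi c \<in> carrier A" using zS' by (auto simp: psi_def A_def TA_simps)
  have minus: "\<And>x y. x \<in> carrier A \<Longrightarrow> y \<in> carrier A \<Longrightarrow> x \<ominus>\<^bsub>A\<^esub> y = (\<lambda>i. x i - y i)"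
    unfolding A_def by (rule TA_minus[OF dS'])
  have inI: "\<And>x y. x \<in> carrier A \<Longrightarrow> y \<in> carrier A \<Longrightarrow> (\<forall>i\<in>S. x i = y i) \<Longrightarrow> x \<ominus>\<^bsub>A\<^esub> y \<in> I"
    unfolding I_def using minus A.minus_closed by fastforce
  have E0: "\<And>r. E (replicate e 0) r = r"
    and E1: "\<And>i. i \<in> S \<Longrightarrow> i \<noteq> replicate e 0 \<Longrightarrow> E i 1 = 0"
    and Eadd: "\<And>i r s. i \<in> S \<Longrightarrow> E i (r + s) = E i r + E i s"
    and Ephi: "\<And>i c r. i \<in> S \<Longrightarrow> E i (phi c * r) = phi c * E i r"
    and Emul: "\<And>i r s. i \<in> S \<Longrightarrow> E i (r * s) = conv e (\<lambda>j. E j r) (\<lambda>l. E l s) i"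
    using E unfolding HS_deriv_def conv_def Pset_def by auto
  have h1: "phi 1 = 1" and hadd: "\<And>c d. phi (c + d) = phi c + phi d" and hmul: "\<And>c d. phi (c * d) = phi c * phi d"
    using hom unfolding is_ring_hom_fun_def by auto
  have fmul: "(f r \<otimes>\<^bsub>A\<^esub> f s) i = E i (r * s)" if "i \<in> S" for r s i
  proof -
    have "(f r \<otimes>\<^bsub>A\<^esub> f s) i = conv e (f r) (f s) i" using that sub by (auto simp: A_def TA_simps)
    also have "\<dots> = conv e (\<lambda>j. E j r) (\<lambda>l. E l s) i"
      unfolding f_def using conv_trunc1[OF dS that, where F="\<lambda>j. E j r" and h="\<lambda>i. if i \<in> S then E i s else 0"]
        conv_trunc2[OF dS that, where F="\<lambda>j. E j s" and h="\<lambda>j. E j r"] by simp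
    finally show ?thesis using Emul[OF that] by simp
  qed
  have psi_mul: "(psi c \<otimes>\<^bsub>A\<^esub> x) i = phi c * x i" if "x \<in> carrier A" for c x i
  proof (cases "i \<in> S'")
    case True
    then show ?thesis unfolding psi_def by (simp add: A_def TA_simps conv_delta len)
  next
    case False
    then show ?thesis using that by (simp add: A_def TA_simps)
  qed
  have "\<exists>g :: 'r \<Rightarrow> nat list \<Rightarrow> 'r.
         (\<forall>r. g r \<in> carrier A) \<and> g 1 = \<one>\<^bsub>A\<^esub> \<and>
         (\<forall>r s. g (r + s) = g r \<oplus>\<^bsub>A\<^esub> g s) \<and>
         (\<forall>r s. g (r * s) = g r \<otimes>\<^bsub>A\<^esub> g s) \<and>
         (\<forall>c. g (phi c) = psi c) \<and>
         (\<forall>r. g r \<ominus>\<^bsub>A\<^esub> f r \<in> I)"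
    using fs unfolding formally_smooth_def
    apply -
    apply (drule spec[of _ A], drule spec[of _ psi], drule spec[of _ I], drule spec[of _ f])
    apply (erule mp)
    apply (intro conjI)
    subgoal by (rule cr)
    subgoal using psic by blast
    subgoal using zS' by (auto simp: psi_def A_def TA_simps one_idx_def h1)
    subgoal by (auto simp: psi_def A_def TA_simps hadd)
    subgoal
    proof (intro allI ext)
      fix c d i
      show "psi (c * d) i = (psi c \<otimes>\<^bsub>A\<^esub> psi d) i"
        using psi_mul[OF psic, of c d i] by (auto simp: psi_def hmul)
    qed
    subgoal unfolding I_def A_def by (rule TA_ideal[OF dS' sub dS])
    subgoal
    proof (intro ballI ext)
      fix x y i assume x: "x \<in> I" and y: "y \<in> I"
      have "conv e x y i = 0" if iS': "i \<in> S'"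
        unfolding conv_def
      proof (rule sum.neutral, rule ballI)
        fix p assume p: "p \<in> Pset e i"
        obtain j l where [simp]: "p = (j, l)" by (cases p)
        have jl: "j \<in> S'" "l \<in> S'" using dclosed_Pset[OF dS' iS'] p by auto
        have "map2 (+) j l = i" using p by (simp add: Pset_def)
        then have "x j = 0 \<or> y l = 0"
          using x y jl iS' sq[of j l] unfolding I_def by auto
        then show "(case p of (j, l) \<Rightarrow> x j * y l) = 0" by auto
      qed
      then show "(x \<otimes>\<^bsub>A\<^esub> y) i = \<zero>\<^bsub>A\<^esub> i" by (simp add: A_def TA_simps)
    qed
    subgoal using fc by blast
    subgoal by (rule inI[OF fc A.one_closed]) (auto simp: f_def A_def TA_simps one_idx_def E0 E1)
    subgoal by (intro allI inI fc A.a_closed) (auto simp: f_def A_def TA_simps Eadd)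
    subgoal by (intro allI inI fc A.m_closed ballI) (simp add: fmul, simp add: f_def)
    subgoal
    proof (intro allI inI fc psic ballI)
      fix c i assume i: "i \<in> S"
      have "E i (phi c) = phi c * E i 1" using Ephi[OF i, of c 1] by simp
      then show "f (phi c) i = psi c i"
        using i by (cases "i = replicate e 0") (auto simp: f_def psi_def E0 E1)
    qed
    done
  then obtain g :: "'r \<Rightarrow> nat list \<Rightarrow> 'r" where
    gc: "\<And>r. g r \<in> carrier A" and g1: "g 1 = \<one>\<^bsub>A\<^esub>" and
    gadd: "\<And>r s. g (r + s) = g r \<oplus>\<^bsub>A\<^esub> g s" and
    gmul: "\<And>r s. g (r * s) = g r \<otimes>\<^bsub>A\<^esub> g s" and
    gphi: "\<And>c. g (phi c) = psi c" and gI: "\<And>r. g r \<ominus>\<^bsub>A\<^esub> f r \<in> I"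
    by blast
  have gS: "g r i = E i r" if "i \<in> S" for r i
    using gI[of r] that unfolding I_def minus[OF gc fc] by (simp add: f_def)
  define E' where "E' = (\<lambda>i r. if i \<in> S' then g r i else E i r)"
  have "HS_deriv phi e S' E'"
    unfolding HS_deriv_def
  proof (intro conjI ballI allI impI)
    fix r show "E' (replicate e 0) r = r" using zS' z gS E0 by (simp add: E'_def)
  next
    fix i assume "i \<in> S'" "i \<noteq> replicate e 0"
    then show "E' i 1 = 0" by (simp add: E'_def g1 A_def TA_simps one_idx_def)
  next
    fix i r s assume "i \<in> S'"
    then show "E' i (r + s) = E' i r + E' i s" by (simp add: E'_def gadd A_def TA_simps)
  next
    fix i c r assume "i \<in> S'"
    then show "E' i (phi c * r) = phi c * E' i r" by (simp add: E'_def gmul gphi psi_mul gc)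
  next
    fix i r s assume i: "i \<in> S'"
    have "E' i (r * s) = conv e (g r) (g s) i" using i by (simp add: E'_def gmul A_def TA_simps)
    also have "\<dots> = (\<Sum>(j, l)\<in>Pset e i. E' j r * E' l s)"
      unfolding conv_def by (rule sum.cong) (auto simp: E'_def dest: dclosed_Pset[OF dS' i])
    finally show "E' i (r * s) = (\<Sum>(j, l)\<in>{(j, l). length j = e \<and> length l = e \<and> map2 (+) j l = i}. E' j r * E' l s)"
      by (simp add: Pset_def)
  qed
  moreover have "\<forall>i\<in>S. E' i = E i" using sub gS by (auto simp: E'_def)
  ultimately show ?thesis by blast
qed


lemma sum_list_mono_nth:
  "length j = length i \<Longrightarrow> (\<forall>t<length i. j ! t \<le> i ! t) \<Longrightarrow> sum_list j \<le> sum_list (i::nat list)"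
  by (auto simp: sum_list_sum_nth intro!: sum_mono)

lemma sum_list_map2: "length i = length j \<Longrightarrow> sum_list (map2 (+) i j) = sum_list i + sum_list (j::nat list)"
proof (induction i arbitrary: j)
  case Nil then show ?case by simp
next
  case (Cons a i) then show ?case by (cases j) auto
qed

definition Sn :: "nat \<Rightarrow> nat \<Rightarrow> nat \<Rightarrow> nat list set" where
  "Sn e N n = trunc_idx e N \<union> {i. length i = e \<and> sum_list i \<le> n}"

lemma Sn_dclosed: "N > 0 \<Longrightarrow> dclosed e (Sn e N n)"
  unfolding dclosed_def Sn_def trunc_idx_def full_idx_def
proof (intro conjI ballI allI impI)
  fix i j assume i: "i \<in> {i. length i = e \<and> (\<forall>t<e. i ! t < N)} \<union> {i. length i = e \<and> sum_list i \<le> n}"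
    and j: "length j = e \<and> (\<forall>t<e. j ! t \<le> i ! t)"
  then have "sum_list j \<le> sum_list i" using sum_list_mono_nth[of j i] by auto
  then show "j \<in> {i. length i = e \<and> (\<forall>t<e. i ! t < N)} \<union> {i. length i = e \<and> sum_list i \<le> n}"
    using i j by (auto intro: le_less_trans)
qed auto

lemma Sn_sq:
  assumes "i \<in> Sn e N (Suc n) - Sn e N n" "j \<in> Sn e N (Suc n) - Sn e N n"
  shows "map2 (+) i j \<notin> Sn e N (Suc n)"
proof
  assume k: "map2 (+) i j \<in> Sn e N (Suc n)"
  have li: "length i = e" "length j = e" "sum_list i = Suc n" "sum_list j = Suc n" "i \<notin> trunc_idx e N"
    using assms by (auto simp: Sn_def)
  then have "sum_list (map2 (+) i j) = 2 * Suc n" by (simp add: sum_list_map2)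
  then have "map2 (+) i j \<in> trunc_idx e N" using k by (auto simp: Sn_def)
  then have "i \<in> trunc_idx e N" using li unfolding trunc_idx_def by auto
  then show False using li by simp
qed

lemma Sn_sub: "Sn e N n \<subseteq> Sn e N (Suc n)"
  by (auto simp: Sn_def)

theorem theorem2p3:
  fixes phi :: "'k::field \<Rightarrow> 'r::comm_ring_1"
    and p e m :: nat
    and D :: "nat list \<Rightarrow> 'r \<Rightarrow> 'r"
  assumes "CHAR('k) = p" and "p > 0"
    and "smooth_algebra phi"
    and "e > 0" and "m > 0"
    and "HS_deriv phi e (trunc_idx e (p ^ m)) D"
  shows "\<exists>D' :: nat list \<Rightarrow> 'r \<Rightarrow> 'r.
           HS_deriv phi e (full_idx e) D' \<and> (\<forall>i\<in>trunc_idx e (p ^ m). D' i = D i)"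
proof -
  define N where "N = p ^ m"
  have N0: "N > 0" using assms(2) by (simp add: N_def)
  have hom: "is_ring_hom_fun phi" and fs: "formally_smooth phi"
    using assms(3) unfolding smooth_algebra_def by auto
  have S0: "Sn e N 0 = trunc_idx e N"
  proof -
    have "i \<in> trunc_idx e N" if "length i = e" "sum_list i \<le> 0" for i
    proof -
      have "\<forall>t<e. i ! t < N"
      proof (intro allI impI)
        fix t assume "t < e"
        then have "i ! t \<le> sum_list i" using elem_le_sum_list that(1) by auto
        then show "i ! t < N" using that(2) N0 by linarith
      qed
      then show ?thesis using that(1) by (simp add: trunc_idx_def)
    qed
    then show ?thesis unfolding Sn_def by auto
  qed
  have HD: "HS_deriv phi e (Sn e N 0) D" using assms(6) S0 by (simp add: N_def)
  define F where "F = rec_nat D (\<lambda>n Fn. SOME E'. HS_deriv phi e (Sn e N (Suc n)) E' \<and> (\<forall>i\<in>Sn e N n. E' i = Fn i))"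
  have F0: "F 0 = D" by (simp add: F_def)
  have FS: "F (Suc n) = (SOME E'. HS_deriv phi e (Sn e N (Suc n)) E' \<and> (\<forall>i\<in>Sn e N n. E' i = F n i))" for n
    by (simp add: F_def)
  have ex: "HS_deriv phi e (Sn e N (Suc n)) (F (Suc n)) \<and> (\<forall>i\<in>Sn e N n. F (Suc n) i = F n i)"
    if "HS_deriv phi e (Sn e N n) (F n)" for n
    unfolding FS[of n]
    by (rule someI_ex[OF step[OF hom fs Sn_dclosed[OF N0] Sn_dclosed[OF N0] Sn_sub Sn_sq that]])
  have FH: "HS_deriv phi e (Sn e N n) (F n)" for n
    by (induction n) (use HD F0 ex in auto)
  have Fagree: "F (n + k) i = F n i" if "i \<in> Sn e N n" for n k i
  proof (induction k)
    case (Suc k)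
    have "i \<in> Sn e N (n + k)" using that by (auto simp: Sn_def)
    then show ?case using ex[OF FH[of "n + k"]] Suc by simp
  qed simp
  define D' where "D' = (\<lambda>i. F (sum_list i) i)"
  have D'F: "D' i = F n i" if "length i = e" "sum_list i \<le> n" for i n
  proof -
    have "i \<in> Sn e N (sum_list i)" using that by (simp add: Sn_def)
    from Fagree[OF this, of "n - sum_list i"] that(2) show ?thesis by (simp add: D'_def)
  qed
  have D'B: "D' i = D i" if "i \<in> trunc_idx e N" for i
  proof -
    have "i \<in> Sn e N 0" using that S0 by simp
    from Fagree[OF this, of "sum_list i"] show ?thesis by (simp add: D'_def F0)
  qed
  have "HS_deriv phi e (full_idx e) D'"
    unfolding HS_deriv_def
  proof (intro conjI ballI allI impI)
    have z: "replicate e 0 \<in> Sn e N 0" by (simp add: Sn_def)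
    fix r show "D' (replicate e 0) r = r"
      using D'F[of "replicate e 0" 0] FH[of 0] z unfolding HS_deriv_def by simp
  next
    fix i assume i: "i \<in> full_idx e" "i \<noteq> replicate e 0"
    then have "i \<in> Sn e N (sum_list i)" "length i = e" by (auto simp: Sn_def full_idx_def)
    then show "D' i 1 = 0" using FH[of "sum_list i"] i(2) D'F[of i "sum_list i"] unfolding HS_deriv_def by simp
  next
    fix i r s assume i: "i \<in> full_idx e"
    then have "i \<in> Sn e N (sum_list i)" "length i = e" by (auto simp: Sn_def full_idx_def)
    then show "D' i (r + s) = D' i r + D' i s" using FH[of "sum_list i"] D'F[of i "sum_list i"] unfolding HS_deriv_def by simp
  next
    fix i c r assume i: "i \<in> full_idx e"
    then have "i \<in> Sn e N (sum_list i)" "length i = e" by (auto simp: Sn_def full_idx_def)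
    moreover have "F (sum_list i) i (phi c * r) = phi c * F (sum_list i) i r"
      using FH[of "sum_list i"] \<open>i \<in> Sn e N (sum_list i)\<close> unfolding HS_deriv_def by blast
    ultimately show "D' i (phi c * r) = phi c * D' i r" using D'F[of i "sum_list i"] by simp
  next
    fix i r s assume i: "i \<in> full_idx e"
    then have iS: "i \<in> Sn e N (sum_list i)" and li: "length i = e" by (auto simp: Sn_def full_idx_def)
    let ?P = "{(j, l). length j = e \<and> length l = e \<and> map2 (+) j l = i}"
    have "D' i (r * s) = F (sum_list i) i (r * s)" using D'F[of i "sum_list i"] li by simp
    also have "\<dots> = (\<Sum>(j, l)\<in>?P. F (sum_list i) j r * F (sum_list i) l s)"
      using FH[of "sum_list i"] iS unfolding HS_deriv_def by blast
    also have "\<dots> = (\<Sum>(j, l)\<in>?P. D' j r * D' l s)"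
    proof (rule sum.cong[OF refl])
      fix x assume x: "x \<in> ?P"
      obtain j l where xjl: "x = (j, l)" by (cases x)
      have jl: "length j = e" "length l = e" "map2 (+) j l = i" using x xjl by auto
      then have "sum_list i = sum_list j + sum_list l" using sum_list_map2 by metis
      then show "(case x of (j, l) \<Rightarrow> F (sum_list i) j r * F (sum_list i) l s) = (case x of (j, l) \<Rightarrow> D' j r * D' l s)"
        using D'F[of j "sum_list i"] D'F[of l "sum_list i"] jl xjl by simp
    qed
    finally show "D' i (r * s) = (\<Sum>(j, l)\<in>?P. D' j r * D' l s)" .
  qed
  then show ?thesis using D'B unfolding N_def by blast
qed

end
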